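(* Let $\mathcal{X}\subset\mathbb{R}^n$ be convex and compact with $\mathbf{0}\in\mathcal{X}$ and diameter at most $D$ (i.e. $\|\mathbf{x}-\mathbf{y}\|_2\le D$ for all $\mathbf{x},\mathbf{y}\in\mathcal{X}$). Let $f_0,f_1,\dots,f_T:\mathcal{X}\to\mathbb{R}$ be convex differentiable functions and let $\eta\in(0,1]$. Let $\mathbf{x}_0\in\mathcal{X}$ and for $t\ge 0$ define $\mathbf{x}_t'\in\arg\min_{\mathbf{x}\in\mathcal{X}}\langle\nabla f_t(\mathbf{x}_t),\mathbf{x}\rangle$ and $\mathbf{x}_{t+1}=(1-\eta)\mathbf{x}_t+\eta\mathbf{x}_t'$. Then for any $\mathbf{v}_0,\mathbf{v}_1,\dots,\mathbf{v}_T\in\mathcal{X}$ and every $t\in\{1,\dots,T\}$, $$f_t(\mathbf{x}_t)-f_t(\mathbf{v}_t)\le f^{\sup}_{t,t-1}+(1-\eta)\big(f_{t-1}(\mathbf{x}_{t-1})-f_{t-1}(\mathbf{v}_{t-1})\big)+f_{t-1}(\mathbf{v}_{t-1})-f_t(\mathbf{v}_t)+\eta D\|\nabla f_t(\mathbf{x}_t)-\nabla f_{t-1}(\mathbf{x}_{t-1})\|_2,$$ where $f^{\sup}_{t,t-1}=\sup_{\mathbf{x}\in\mathcal{X}}|f_t(\mathbf{x})-f_{t-1}(\mathbf{x})|$.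
   Context: The iteration is the Online Frank-Wolfe (OFW) update with constant step size $\eta$. *)

theory Defs
  imports "HOL-Analysis.Analysis"
begin

end

theory Submission
  imports Defs
begin

lemma tangent:
  fixes f :: "'a::real_inner \<Rightarrow> real"
  assumes cv: "convex_on X f" and xX: "x \<in> X" and yX: "y \<in> X"
    and gd: "GDERIV f x :> G"
  shows "f x + G \<bullet> (y - x) \<le> f y"
proof -
  define d where "d = y - x"
  define \<phi> where "\<phi> = (\<lambda>u::real. f (x + u *\<^sub>R d))"
  have fd: "(f has_derivative (\<lambda>h. G \<bullet> h)) (at x)"
    using gd by (simp add: gderiv_def inner_commute)
  have ld: "((\<lambda>u::real. x + u *\<^sub>R d) has_derivative (\<lambda>u. u *\<^sub>R d)) (at 0)"
    by (auto intro!: derivative_eq_intros)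
  have "(\<phi> has_derivative (\<lambda>u. G \<bullet> (u *\<^sub>R d))) (at 0)"
    unfolding \<phi>_def using diff_chain_at[OF ld, of f "\<lambda>h. G \<bullet> h"] fd by (simp add: o_def)
  hence "(\<phi> has_field_derivative (G \<bullet> d)) (at 0)"
    unfolding has_field_derivative_def by (rule has_derivative_eq_rhs) (auto simp: mult.commute)
  hence "(\<phi> has_field_derivative (G \<bullet> d)) (at 0 within {0<..})"
    by (rule has_field_derivative_at_within)
  hence lim: "((\<lambda>u. (\<phi> u - \<phi> 0) / (u - 0)) \<longlongrightarrow> G \<bullet> d) (at 0 within {0<..})"
    using has_field_derivative_iff by blast
  have ev: "\<forall>\<^sub>F u in at 0 within {0<..}. (\<phi> u - \<phi> 0) / (u - 0) \<le> f y - f x"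
  proof -
    have "\<forall>\<^sub>F u in at_right (0::real). 0 < u \<and> u < 1"
      unfolding eventually_at_right[OF zero_less_one] by (intro exI[of _ 1]) auto
    thus ?thesis
    proof (rule eventually_mono)
      fix u :: real assume "0 < u \<and> u < 1"
      then have u0: "0 < u" and u1: "u < 1" by auto
      show "(\<phi> u - \<phi> 0) / (u - 0) \<le> f y - f x"
      proof -
        have "f (x + u *\<^sub>R d) = f ((1 - u) *\<^sub>R x + u *\<^sub>R y)"
          by (simp add: d_def algebra_simps)
        also have "\<dots> \<le> (1 - u) * f x + u * f y"
          using convex_onD[OF cv, of u x y] u0 u1 xX yX by simp
        finally have "\<phi> u - \<phi> 0 \<le> u * (f y - f x)"
          by (simp add: \<phi>_def algebra_simps)
        thus ?thesis using u0 by (simp add: divide_le_eq mult.commute)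
      qed
    qed
  qed
  have "G \<bullet> d \<le> f y - f x"
    by (rule tendsto_upperbound[OF lim ev]) simp
  thus ?thesis by (simp add: d_def)
qed
theorem lemma1:
  fixes X :: "(real ^ 'n) set" and D \<eta> :: real and T :: nat
    and f :: "nat \<Rightarrow> real ^ 'n \<Rightarrow> real"
    and g :: "nat \<Rightarrow> real ^ 'n \<Rightarrow> real ^ 'n"
    and x x' v :: "nat \<Rightarrow> real ^ 'n"
  assumes "convex X" and "compact X" and "0 \<in> X"
    and "\<forall>y\<in>X. \<forall>z\<in>X. norm (y - z) \<le> D"
    and "\<forall>t\<le>T. convex_on X (f t)"
    and "\<forall>t\<le>T. \<forall>y\<in>X. GDERIV (f t) y :> g t y"
    and "0 < \<eta>" and "\<eta> \<le> 1"
    and "x 0 \<in> X"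
    and "\<forall>t<T. x' t \<in> X \<and> (\<forall>y\<in>X. g t (x t) \<bullet> x' t \<le> g t (x t) \<bullet> y)"
    and "\<forall>t<T. x (Suc t) = (1 - \<eta>) *\<^sub>R x t + \<eta> *\<^sub>R x' t"
    and "\<forall>t\<le>T. v t \<in> X"
    and "t \<in> {1..T}"
  shows "f t (x t) - f t (v t)
    \<le> (SUP y\<in>X. \<bar>f t y - f (t - 1) y\<bar>)
      + (1 - \<eta>) * (f (t - 1) (x (t - 1)) - f (t - 1) (v (t - 1)))
      + f (t - 1) (v (t - 1)) - f t (v t)
      + \<eta> * D * norm (g t (x t) - g (t - 1) (x (t - 1)))"
proof -
  note A = assms
  have xin: "\<forall>k\<le>T. x k \<in> X"
  proof (intro allI impI)
    fix k assume "k \<le> T" thus "x k \<in> X"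
    proof (induction k)
      case 0 thus ?case using A(9) by simp
    next
      case (Suc k)
      hence "k < T" by simp
      hence "x (Suc k) = (1 - \<eta>) *\<^sub>R x k + \<eta> *\<^sub>R x' k" "x' k \<in> X" using A(10,11) by auto
      moreover have "x k \<in> X" using Suc by simp
      ultimately show ?case using convexD[OF A(1), of "x k" "x' k" "1 - \<eta>" \<eta>] A(7,8) by simp
    qed
  qed
  define s where "s = t - 1"
  have ts: "t = Suc s" and sT: "s < T" and tT: "t \<le> T" using A(13) by (auto simp: s_def)
  have xs: "x s \<in> X" and xt: "x t \<in> X" using xin sT tT by auto
  have x's: "x' s \<in> X" and opt: "\<forall>y\<in>X. g s (x s) \<bullet> x' s \<le> g s (x s) \<bullet> y" using A(10) sT by auto
  have rec: "x t = (1 - \<eta>) *\<^sub>R x s + \<eta> *\<^sub>R x' s" using A(11) sT ts by auto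
  have vs: "v s \<in> X" and vt: "v t \<in> X" using A(12) sT tT by auto
  have cs: "convex_on X (f s)" and ct: "convex_on X (f t)" using A(5) sT tT by auto
  have gs: "GDERIV (f s) (x s) :> g s (x s)" and gt: "GDERIV (f t) (x t) :> g t (x t)"
    using A(6) sT tT xs xt by auto
  have cont: "continuous_on X (\<lambda>y. \<bar>f t y - f s y\<bar>)"
  proof -
    have "\<forall>y\<in>X. isCont (\<lambda>y. \<bar>f t y - f s y\<bar>) y"
    proof
      fix y assume y: "y \<in> X"
      have "(f t has_derivative (\<lambda>h. h \<bullet> g t y)) (at y)" "(f s has_derivative (\<lambda>h. h \<bullet> g s y)) (at y)"
        using A(6) y sT tT by (auto simp: gderiv_def)
      hence "isCont (f t) y" "isCont (f s) y" by (auto intro: has_derivative_continuous)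
      thus "isCont (\<lambda>y. \<bar>f t y - f s y\<bar>) y" by (intro continuous_intros)
    qed
    thus ?thesis by (rule continuous_at_imp_continuous_on)
  qed
  have bdd: "bdd_above ((\<lambda>y. \<bar>f t y - f s y\<bar>) ` X)"
    using compact_continuous_image[OF cont A(2)] by (auto intro: bounded_imp_bdd_above compact_imp_bounded)
  define S where "S = (SUP y\<in>X. \<bar>f t y - f s y\<bar>)"
  have sup: "f t (x s) - f s (x s) \<le> S"
    unfolding S_def using cSUP_upper[OF xs bdd] by linarith
  have t1: "f t (x t) + g t (x t) \<bullet> (x s - x t) \<le> f t (x s)" by (rule tangent[OF ct xt xs gt])
  have t2: "f s (x s) + g s (x s) \<bullet> (v s - x s) \<le> f s (v s)" by (rule tangent[OF cs xs vs gs])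
  have diff: "x t - x s = \<eta> *\<^sub>R (x' s - x s)" using rec by (simp add: algebra_simps)
  have o1: "g s (x s) \<bullet> (x' s - x s) \<le> g s (x s) \<bullet> (v s - x s)"
    using opt vs by (simp add: inner_diff_right)
  have cs2: "(g t (x t) - g s (x s)) \<bullet> (x' s - x s) \<le> norm (g t (x t) - g s (x s)) * D"
  proof -
    have "(g t (x t) - g s (x s)) \<bullet> (x' s - x s) \<le> norm (g t (x t) - g s (x s)) * norm (x' s - x s)"
      by (rule norm_cauchy_schwarz)
    also have "\<dots> \<le> norm (g t (x t) - g s (x s)) * D"
      using A(4) x's xs by (intro mult_left_mono) auto
    finally show ?thesis .
  qed
  have key: "g t (x t) \<bullet> (x' s - x s) \<le> f s (v s) - f s (x s) + norm (g t (x t) - g s (x s)) * D"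
  proof -
    have "g t (x t) \<bullet> (x' s - x s) = (g t (x t) - g s (x s)) \<bullet> (x' s - x s) + g s (x s) \<bullet> (x' s - x s)"
      by (simp add: inner_diff_left)
    thus ?thesis using cs2 o1 t2 by linarith
  qed
  have "g t (x t) \<bullet> (x s - x t) = - \<eta> * (g t (x t) \<bullet> (x' s - x s))"
    using diff by (metis inner_minus_right inner_scaleR_right minus_diff_eq mult_minus_left)
  hence "f t (x t) - f t (x s) \<le> \<eta> * (f s (v s) - f s (x s) + norm (g t (x t) - g s (x s)) * D)"
    using t1 key A(7) mult_left_mono[OF key, of \<eta>] by linarith
  hence "f t (x t) - f t (v t) \<le> S + (1 - \<eta>) * (f s (x s) - f s (v s)) + f s (v s) - f t (v t)
      + \<eta> * D * norm (g t (x t) - g s (x s))"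
    using sup by (simp add: algebra_simps)
  thus ?thesis unfolding S_def s_def .
qed

end
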